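(* Let $r\in[0,\infty)$ satisfy $\mathbb{E}_P[e^{rX_1}]<\infty$, let $\xi\in\mathcal{R}_+(D)$, and let $Q^r$, $\{Q^r_\theta\}_{\theta\in D}$ and the $P_\Theta$-null set $L_{\ast\ast}$ be as described in the context. Then for every $\theta\notin L_{\ast\ast}$, \[ \kappa_\theta'(r)=\frac{\mathbb{E}_{Q^r_\theta}[X_1]}{\mathbb{E}_{Q^r_\theta}[W_1]}-c(\theta), \] where $\kappa_\theta'$ denotes the derivative of $r\mapsto\kappa_\theta(r)$.
   Context: Let $(\Omega,\Sigma,P)$ be a probability space, $d\in\mathbb{N}$, $D\subseteq\mathbb{R}^d$ a Borel set, and $\Theta$ a random vector on $\Omega$ with values in $D$ and distribution $P_\Theta$. Let $N=\{N_t\}_{t\ge0}$ be a counting process (values in $\mathbb{N}_0$, $N_0=0$, right-continuous paths, jumps of size one, $N_t\to\infty$), with arrival times $T_n$ ($T_0=0$), interarrival times $W_n=T_n-T_{n-1}$, and let $X=(X_n)_{n\in\mathbb{N}}$ be positive random variables; put $S_t=\sum_{k=1}^{N_t}X_k$ ($S_0=0$). Standing assumptions on $P$: $X$ is $P$-i.i.d. and $P$-independent of $N$; the sequence $W$ is $P$-conditionally independent given $\sigma(\Theta)$ and, for every $n$, the conditional distribution of $W_n$ given $\Theta$ equals $\mathbf{K}(\Theta)$ $P$-a.s., where $\{\mathbf{K}(\theta)\}_{\theta\in D}$ is a measurably parametrized family of probability distributions on $(0,\infty)$ (i.e. $S$ is a compound mixed renewal process); (a1) $W$ and $X$ are $P$-conditionally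 independent given $\Theta$; (a2) $\Theta$ and $X$ are $P$-independent. $\{P_\theta\}_{\theta\in D}$ is a regular conditional probability of $P$ over $P_\Theta$ consistent with $\Theta$: $\theta\mapsto P_\theta(E)$ is Borel, $\int P_\theta(E)\,P_\Theta(d\theta)=P(E)$ for all $E\in\Sigma$, and for each Borel $B$, $P_\theta(\Theta^{-1}(B))=1$ for $P_\Theta$-a.e. $\theta\in B$. There is a $P_\Theta$-null set $L_P$ such that for $\theta\notin L_P$, under $P_\theta$ the $W_n$ are i.i.d. with law $\mathbf{K}(\theta)$, the $X_n$ are i.i.d. with law $P_{X_1}$, and $W,X$ are independent. $\mathcal{F}_t=\sigma(\sigma(S_s:s\le t)\cup\sigma(\Theta))$. $c:D\to(0,\infty)$ is Borel measurable (premium rate). $M_{X_1}$ is the moment generating function of $X_1$ under $P$ and $(M_\theta)_{W_1}$ that of $W_1$ under $P_\theta$. For $r\ge0$ with $\mathbb{E}_P[e^{rX_1}]<\infty$ and $\theta\notin L_P$, $\kappa_\theta(r)$ is the unique real solution $\kappa$ of $M_{X_1}(r)\,(M_\theta)_{W_1}(-\kappa-c(\theta)r)=1$. $\mathcal{R}_+(D)$ is the class of Borel $\xi:D\to\mathbb{R}$ with $P_\Theta(\{\xi>0\})=1$ and $\mathbb{E}_P[\xi(\Theta)]=1$. For such $r$ and $\xi$ there are a probability measure $Q^r$ on $\Sigma$ (satisfying (a1), (a2), with $Q^r\restriction\mathcal{F}_t\sim P\restriction\mathcal{F}_t$ for all $t$, and $S$ a compound mixed renewal process under $Q^r$), a $P_\Theta$-null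 Borel set $L_{\ast\ast}\supseteq L_P$, and a regular conditional probability $\{Q^r_\theta\}_{\theta\in D}$ of $Q^r$ over $Q^r_\Theta$ consistent with $\Theta$, where $Q^r_\Theta(d\theta)=\xi(\theta)P_\Theta(d\theta)$, such that for every $\theta\notin L_{\ast\ast}$: $Q^r_\theta\restriction\mathcal{F}_t\sim P_\theta\restriction\mathcal{F}_t$ for all $t\ge0$, and under $Q^r_\theta$ the $W_n$ are i.i.d. with law $\Lambda_r(\theta)(dw)=e^{-(\kappa_\theta(r)+c(\theta)r)w}\mathbf{K}(\theta)(dw)/\int_{(0,\infty)}e^{-(\kappa_\theta(r)+c(\theta)r)v}\mathbf{K}(\theta)(dv)$, the $X_n$ are i.i.d. with law $e^{rx}P_{X_1}(dx)/\mathbb{E}_P[e^{rX_1}]$, and $W$ and $X$ are independent (so $S$ is a $Q^r_\theta$-compound renewal process). *)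

theory Defs
  imports "HOL-Probability.Probability"
begin

definition mgf :: "'a measure \<Rightarrow> ('a \<Rightarrow> real) \<Rightarrow> real \<Rightarrow> real" where
  "mgf M Y t = (\<integral>\<omega>. exp (t * Y \<omega>) \<partial>M)"

definition kappa ::
  "'a measure \<Rightarrow> 'a measure \<Rightarrow> ('a \<Rightarrow> real) \<Rightarrow> ('a \<Rightarrow> real) \<Rightarrow> real \<Rightarrow> real \<Rightarrow> real" where
  "kappa P P\<theta> X1 W1 c\<theta> r =
     (THE k. mgf P X1 r * mgf P\<theta> W1 (- k - c\<theta> * r) = 1)"

definition exp_tilt :: "real measure \<Rightarrow> real \<Rightarrow> real measure" where
  "exp_tilt \<mu> a = density \<mu> (\<lambda>x. ennreal (exp (a * x) / (\<integral>y. exp (a * y) \<partial>\<mu>)))"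

end

theory Submission
  imports Defs
begin


lemma exp_dq_bound:
  fixes x t t0 :: real
  assumes "x > 0"
  shows "\<bar>(exp (t*x) - exp (t0*x)) / (t - t0)\<bar> \<le> x * exp (max t t0 * x)"
proof -
  have key: "exp (b*x) - exp (a*x) \<le> (b - a) * x * exp (b*x)" if "a \<le> b" for a b
  proof -
    have "1 - (b-a)*x \<le> exp ((a-b)*x)" using exp_ge_add_one_self[of "(a-b)*x"] by (simp add: algebra_simps)
    hence "exp (b*x) * (1 - (b-a)*x) \<le> exp (b*x) * exp ((a-b)*x)"
      by (intro mult_left_mono) auto
    also have "exp (b*x) * exp ((a-b)*x) = exp (a*x)" by (simp add: mult_exp_exp algebra_simps)
    finally show ?thesis by (simp add: algebra_simps)
  qed
  show ?thesis
  proof (cases t t0 rule: linorder_cases)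
    case less
    have "exp (t*x) \<le> exp (t0*x)" using less assms by simp
    moreover have "exp (t0*x) - exp (t*x) \<le> (t0 - t) * x * exp (t0*x)" using key less by simp
    ultimately show ?thesis using less assms
      by (simp add: abs_div_pos abs_if divide_le_eq max_def field_simps)
  next
    case equal then show ?thesis using assms by simp
  next
    case greater
    have "exp (t0*x) \<le> exp (t*x)" using greater assms by simp
    moreover have "exp (t*x) - exp (t0*x) \<le> (t - t0) * x * exp (t*x)" using key greater by simp
    ultimately show ?thesis using greater assms
      by (simp add: abs_div_pos abs_if divide_le_eq max_def field_simps)
  qed
qed

lemma dc_within:
  fixes s :: "real \<Rightarrow> 'a \<Rightarrow> real" and S :: "real set"
  assumes s_meas: "\<And>t. s t \<in> borel_measurable M" and f_meas: "f \<in> borel_measurable M"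
    and w: "integrable M w"
    and lim: "\<And>x. x \<in> space M \<Longrightarrow> ((\<lambda>t. s t x) \<longlongrightarrow> f x) (at t0 within S)"
    and bound: "\<And>t x. t \<in> S \<Longrightarrow> t \<noteq> t0 \<Longrightarrow> \<bar>t - t0\<bar> < \<delta> \<Longrightarrow> x \<in> space M \<Longrightarrow> \<bar>s t x\<bar> \<le> w x"
    and \<delta>: "\<delta> > 0"
  shows "((\<lambda>t. integral\<^sup>L M (s t)) \<longlongrightarrow> integral\<^sup>L M f) (at t0 within S)"
  unfolding tendsto_at_iff_sequentially
proof (intro allI impI)
  fix X :: "nat \<Rightarrow> real" assume XS: "\<forall>i. X i \<in> S - {t0}" and Xl: "X \<longlonglongrightarrow> t0"
  from Xl \<delta> obtain N where N: "\<And>n. n \<ge> N \<Longrightarrow> \<bar>X n - t0\<bar> < \<delta>"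
    by (metis LIMSEQ_iff real_norm_def)
  have "(\<lambda>n. integral\<^sup>L M (s (X (n + N)))) \<longlonglongrightarrow> integral\<^sup>L M f"
  proof (rule integral_dominated_convergence[where w=w])
    show "AE x in M. (\<lambda>n. s (X (n + N)) x) \<longlonglongrightarrow> f x"
    proof (rule AE_I2)
      fix x assume x: "x \<in> space M"
      have "((\<lambda>t. s t x) \<circ> X) \<longlonglongrightarrow> f x"
        using lim[OF x] XS Xl unfolding tendsto_at_iff_sequentially by blast
      then show "(\<lambda>n. s (X (n + N)) x) \<longlonglongrightarrow> f x"
        using LIMSEQ_ignore_initial_segment[of _ _ N] by (simp add: comp_def)
    qed
    show "AE x in M. norm (s (X (n + N)) x) \<le> w x" for n
      using bound[of "X (n+N)"] XS N[of "n+N"] by (intro AE_I2) auto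
  qed (use assms in auto)
  then show "((\<lambda>t. integral\<^sup>L M (s t)) \<circ> X) \<longlonglongrightarrow> integral\<^sup>L M f"
    by (simp add: comp_def LIMSEQ_offset[where k=N])
qed

lemma mgf_deriv_gen:
  fixes M :: "'a measure" and Y :: "'a \<Rightarrow> real"
  assumes M: "prob_space M" and Ym[measurable]: "Y \<in> borel_measurable M"
    and Ypos: "\<And>x. x \<in> space M \<Longrightarrow> Y x > 0"
    and int0: "integrable M (\<lambda>x. exp (t0 * Y x))"
    and intS: "\<And>t. t \<in> S \<Longrightarrow> integrable M (\<lambda>x. exp (t * Y x))"
    and w: "integrable M w" and \<delta>: "\<delta> > 0"
    and bound: "\<And>t x. t \<in> S \<Longrightarrow> t \<noteq> t0 \<Longrightarrow> \<bar>t - t0\<bar> < \<delta> \<Longrightarrow> x \<in> space M \<Longrightarrow>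
       Y x * exp (max t t0 * Y x) \<le> w x"
  shows "(mgf M Y has_real_derivative (\<integral>x. Y x * exp (t0 * Y x) \<partial>M)) (at t0 within S)"
  unfolding has_field_derivative_iff
proof -
  let ?q = "\<lambda>t x. (exp (t * Y x) - exp (t0 * Y x)) / (t - t0)"
  have eq: "\<forall>\<^sub>F t in at t0 within S. (\<integral>x. ?q t x \<partial>M) = (mgf M Y t - mgf M Y t0) / (t - t0)"
    unfolding eventually_at_filter
  proof (intro always_eventually allI impI)
    fix t assume "t \<noteq> t0" "t \<in> S"
    then show "(\<integral>x. ?q t x \<partial>M) = (mgf M Y t - mgf M Y t0) / (t - t0)"
      unfolding mgf_def using intS int0 by (simp add: Bochner_Integration.integral_diff)
  qed
  have lim: "((\<lambda>t. \<integral>x. ?q t x \<partial>M) \<longlongrightarrow> (\<integral>x. Y x * exp (t0 * Y x) \<partial>M)) (at t0 within S)"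
  proof (rule dc_within[where w=w and \<delta>=\<delta>])
    fix x assume "x \<in> space M"
    have "((\<lambda>t. exp (t * Y x)) has_real_derivative exp (t0 * Y x) * Y x) (at t0 within S)"
      by (auto intro!: derivative_eq_intros)
    then show "((\<lambda>t. ?q t x) \<longlongrightarrow> Y x * exp (t0 * Y x)) (at t0 within S)"
      unfolding has_field_derivative_iff by (simp add: mult.commute)
  next
    fix t x assume "t \<in> S" "t \<noteq> t0" "\<bar>t - t0\<bar> < \<delta>" "x \<in> space M"
    then show "\<bar>?q t x\<bar> \<le> w x"
      using bound[of t x] exp_dq_bound[of "Y x" t t0] Ypos[of x] by linarith
  qed (use w \<delta> in auto)
  show "((\<lambda>y. (mgf M Y y - mgf M Y t0) / (y - t0)) \<longlongrightarrow> (\<integral>x. Y x * exp (t0 * Y x) \<partial>M)) (at t0 within S)"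
    using tendsto_cong[OF eq] lim by simp
qed

lemma inv_deriv:
  fixes u v F :: "real \<Rightarrow> real" and I T :: "real set"
  assumes eqF: "\<And>s. s \<in> I \<Longrightarrow> F (u s) = v s"
    and injv: "\<And>s. s \<in> I \<Longrightarrow> s \<noteq> r \<Longrightarrow> v s \<noteq> v r"
    and cont: "(u \<longlongrightarrow> u r) (at r within I)"
    and inT: "\<And>s. s \<in> I \<Longrightarrow> u s \<in> T"
    and beta: "((\<lambda>y. (y - u r) / (F y - F (u r))) \<longlongrightarrow> \<beta>) (at (u r) within T)"
    and dv: "(v has_real_derivative v') (at r within I)"
    and r: "r \<in> I"
  shows "(u has_real_derivative v' * \<beta>) (at r within I)"
  unfolding has_field_derivative_iff
proof -
  have lim1: "((\<lambda>s. (v s - v r) / (s - r)) \<longlongrightarrow> v') (at r within I)"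
    using dv unfolding has_field_derivative_iff .
  have ne: "s \<in> I \<Longrightarrow> s \<noteq> r \<Longrightarrow> u s \<noteq> u r" for s
    using injv[of s] eqF[of s] eqF[OF r] by metis
  have fl: "filterlim u (at (u r) within T) (at r within I)"
    unfolding filterlim_at
  proof
    show "\<forall>\<^sub>F s in at r within I. u s \<in> T \<and> u s \<noteq> u r"
      unfolding eventually_at_filter by (intro always_eventually) (auto simp: inT ne)
  qed (rule cont)
  have lim2: "((\<lambda>s. (u s - u r) / (F (u s) - F (u r))) \<longlongrightarrow> \<beta>) (at (r) within I)"
    by (rule filterlim_compose[OF beta fl])
  have lim: "((\<lambda>s. (v s - v r) / (s - r) * ((u s - u r) / (F (u s) - F (u r)))) \<longlongrightarrow> v' * \<beta>) (at r within I)"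
    by (rule tendsto_mult[OF lim1 lim2])
  have ev: "\<forall>\<^sub>F s in at r within I. (v s - v r) / (s - r) * ((u s - u r) / (F (u s) - F (u r))) = (u s - u r) / (s - r)"
    unfolding eventually_at_filter
  proof (intro always_eventually allI impI)
    fix s assume s: "s \<noteq> r" "s \<in> I"
    then have "v s - v r \<noteq> 0" using injv by simp
    then show "(v s - v r) / (s - r) * ((u s - u r) / (F (u s) - F (u r))) = (u s - u r) / (s - r)"
      using eqF[OF s(2)] eqF[OF r] by simp
  qed
  show "((\<lambda>y. (u y - u r) / (y - r)) \<longlongrightarrow> v' * \<beta>) (at r within I)"
    using tendsto_cong[OF ev] lim by simp
qed

lemma inv_cont:
  fixes u v F :: "real \<Rightarrow> real" and I :: "real set"
  assumes mono: "\<And>a b. a < b \<Longrightarrow> b \<le> 0 \<Longrightarrow> F a < F b"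
    and eqF: "\<And>s. s \<in> I \<Longrightarrow> F (u s) = v s"
    and neg: "\<And>s. s \<in> I \<Longrightarrow> u s \<le> 0"
    and vc: "(v \<longlongrightarrow> v r) (at r within I)" and r: "r \<in> I"
  shows "(u \<longlongrightarrow> u r) (at r within I)"
proof (rule order_tendstoI)
  have inI: "\<forall>\<^sub>F s in at r within I. s \<in> I" by (simp add: eventually_at_filter)
  fix a assume a: "a < u r"
  have "F a < v r" using mono[OF a neg[OF r]] eqF[OF r] by simp
  from order_tendstoD(1)[OF vc this] inI
  show "\<forall>\<^sub>F s in at r within I. a < u s"
  proof eventually_elim
    case (elim s)
    show ?case
    proof (rule ccontr)
      assume "\<not> a < u s"
      then have "u s \<le> a" by simp
      then have "F (u s) \<le> F a" using mono[of "u s" a] a neg[OF r] by (cases "u s = a") auto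
      then show False using elim eqF by auto
    qed
  qed
next
  have inI: "\<forall>\<^sub>F s in at r within I. s \<in> I" by (simp add: eventually_at_filter)
  fix a assume a: "u r < a"
  show "\<forall>\<^sub>F s in at r within I. u s < a"
  proof (cases "a \<le> 0")
    case False
    have "s \<in> I \<Longrightarrow> u s < a" for s using neg[of s] False by simp
    then show ?thesis using inI by (simp add: eventually_mono)
  next
    case True
    have "v r < F a" using mono[OF a True] eqF[OF r] by simp
    from order_tendstoD(2)[OF vc this] inI
    show ?thesis
    proof eventually_elim
      case (elim s)
      show ?case
      proof (rule ccontr)
        assume "\<not> u s < a"
        then have "a \<le> u s" by simp
        then have "F a \<le> F (u s)" using mono[of a "u s"] neg[OF elim(2)] by (cases "u s = a") auto
        then show False using elim eqF by auto
      qed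
    qed
  qed
qed

locale pmgf =
  fixes M :: "'a measure" and Y :: "'a \<Rightarrow> real"
  assumes M: "prob_space M" and Ym[measurable]: "Y \<in> borel_measurable M"
    and Ypos: "\<And>x. x \<in> space M \<Longrightarrow> Y x > 0"
begin

lemma int_nonpos: "t \<le> 0 \<Longrightarrow> integrable M (\<lambda>x. exp (t * Y x))"
proof -
  assume t: "t \<le> 0"
  interpret prob_space M by (rule M)
  show ?thesis
  proof (rule integrable_const_bound[where B=1])
    show "AE x in M. norm (exp (t * Y x)) \<le> 1"
      using Ypos t by (intro AE_I2) (simp add: mult_nonpos_nonneg less_imp_le)
  qed simp
qed

lemma mgf_pos: "integrable M (\<lambda>x. exp (t * Y x)) \<Longrightarrow> mgf M Y t > 0"
proof -
  assume i: "integrable M (\<lambda>x. exp (t * Y x))"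
  interpret prob_space M by (rule M)
  have "(\<integral>x. 0 \<partial>M) < (\<integral>x. exp (t * Y x) \<partial>M)"
    by (intro integral_less_AE_space) (auto simp: i emeasure_space_1)
  then show ?thesis by (simp add: mgf_def)
qed

lemma mgf_strict: "t1 < t2 \<Longrightarrow> integrable M (\<lambda>x. exp (t1 * Y x)) \<Longrightarrow>
   integrable M (\<lambda>x. exp (t2 * Y x)) \<Longrightarrow> mgf M Y t1 < mgf M Y t2"
proof -
  assume a: "t1 < t2" "integrable M (\<lambda>x. exp (t1 * Y x))" "integrable M (\<lambda>x. exp (t2 * Y x))"
  interpret prob_space M by (rule M)
  have "(\<integral>x. exp (t1 * Y x) \<partial>M) < (\<integral>x. exp (t2 * Y x) \<partial>M)"
    using a Ypos by (intro integral_less_AE_space) (auto simp: emeasure_space_1)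
  then show ?thesis by (simp add: mgf_def)
qed

lemma mgf_0: "mgf M Y 0 = 1"
proof -
  interpret prob_space M by (rule M)
  show ?thesis by (simp add: mgf_def prob_space)
qed

lemma int_0: "integrable M (\<lambda>x. exp (0 * Y x))"
  by (rule int_nonpos) simp

lemma mgf_le1: "t \<le> 0 \<Longrightarrow> mgf M Y t \<le> 1"
  using mgf_strict[of t 0] int_nonpos[of t] int_0 mgf_0 by (cases "t = 0") (auto simp: mgf_0)

lemma mgf_gt1: "t > 0 \<Longrightarrow> integrable M (\<lambda>x. exp (t * Y x)) \<Longrightarrow> mgf M Y t > 1"
  using mgf_strict[of 0 t] int_0 mgf_0 by auto

lemma mgf_pos_cases: "t > 0 \<Longrightarrow> mgf M Y t = 0 \<or> mgf M Y t > 1"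
  using mgf_gt1[of t] unfolding mgf_def
  by (cases "integrable M (\<lambda>x. exp (t * Y x))") (auto simp: not_integrable_integral_eq)

lemma mgf_cont: fixes t0 :: real shows "t0 \<le> 0 \<Longrightarrow> continuous (at t0 within {..0}) (mgf M Y)"
  unfolding continuous_within mgf_def
proof (rule dc_within[where w="\<lambda>_. 1" and \<delta>=1])
  interpret prob_space M by (rule M)
  show "integrable M (\<lambda>_. 1::real)" by simp
  fix t :: real and x assume "t \<in> {..0}" "x \<in> space M"
  then show "\<bar>exp (t * Y x)\<bar> \<le> 1" using Ypos[of x] by (simp add: mult_nonpos_nonneg less_imp_le)
qed (auto intro!: tendsto_intros)

lemma mgf_lim: "(\<lambda>n. mgf M Y (- real n)) \<longlonglongrightarrow> 0"
proof -
  interpret prob_space M by (rule M)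
  have "(\<lambda>n. \<integral>x. exp (- real n * Y x) \<partial>M) \<longlonglongrightarrow> (\<integral>x. 0 \<partial>M)"
  proof (rule integral_dominated_convergence[where w="\<lambda>_. 1"])
    show "AE x in M. (\<lambda>n. exp (- real n * Y x)) \<longlonglongrightarrow> 0"
    proof (rule AE_I2)
      fix x assume x: "x \<in> space M"
      have "filterlim (\<lambda>n. real n * Y x) at_top sequentially"
        using Ypos[OF x] by (intro filterlim_at_top_mult_tendsto_pos[OF tendsto_const]) (auto simp: filterlim_real_sequentially)
      then have "filterlim (\<lambda>n. - real n * Y x) at_bot sequentially"
        by (simp add: filterlim_uminus_at_top)
      then show "(\<lambda>n. exp (- real n * Y x)) \<longlonglongrightarrow> 0"
        by (rule filterlim_compose[OF exp_at_bot])
    qed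
    show "AE x in M. norm (exp (- real n * Y x)) \<le> 1" for n
      using Ypos by (intro AE_I2) (simp add: mult_nonpos_nonneg less_imp_le)
  qed auto
  then show ?thesis by (simp add: mgf_def)
qed

lemma mgf_solve: "0 < y \<Longrightarrow> y \<le> 1 \<Longrightarrow> \<exists>t\<le>0. mgf M Y t = y"
proof -
  assume y: "0 < y" "y \<le> 1"
  obtain n where n: "mgf M Y (- real n) < y"
    using mgf_lim y(1) by (metis LIMSEQ_le_const linorder_not_le order_less_irrefl)
  have "continuous_on {- real n..0} (mgf M Y)"
    unfolding continuous_on_eq_continuous_within
    by (auto intro: continuous_within_subset[OF mgf_cont])
  then obtain t where "- real n \<le> t" "t \<le> 0" "mgf M Y t = y"
    using IVT'[of "mgf M Y" "- real n" y 0] n y mgf_0 by auto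
  then show ?thesis by auto
qed

lemma mgf_unique: "0 < y \<Longrightarrow> y \<le> 1 \<Longrightarrow> \<exists>!t. mgf M Y t = y"
proof -
  assume y: "0 < y" "y \<le> 1"
  obtain t where t: "t \<le> 0" "mgf M Y t = y" using mgf_solve y by blast
  have "t' \<le> 0" if "mgf M Y t' = y" for t'
    using mgf_pos_cases[of t'] that y by (cases "t' \<le> 0") auto
  moreover have "t' = t" if "mgf M Y t' = y" "t' \<le> 0" for t'
    using mgf_strict[of t t'] mgf_strict[of t' t] int_nonpos that t
    by (cases t t' rule: linorder_cases) auto
  ultimately show ?thesis using t by blast
qed

lemma int_min: "integrable M (\<lambda>x. min (Y x) (real n))"
proof -
  interpret prob_space M by (rule M)
  show ?thesis
  proof (rule integrable_const_bound[where B="real n"])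
    show "AE x in M. norm (min (Y x) (real n)) \<le> real n"
    proof (rule AE_I2)
      fix x assume "x \<in> space M"
      then have "Y x > 0" by (rule Ypos)
      then show "norm (min (Y x) (real n)) \<le> real n" by (auto simp: min_def)
    qed
  qed simp
qed

lemma big_min:
  assumes ni: "\<not> integrable M Y"
  shows "\<exists>n. (\<integral>x. min (Y x) (real n) \<partial>M) > B"
proof (rule ccontr)
  assume "\<not> ?thesis"
  then have bnd: "\<And>n. (\<integral>x. min (Y x) (real n) \<partial>M) \<le> B" by (meson not_le)
  have inc: "incseq (\<lambda>n. \<integral>x. min (Y x) (real n) \<partial>M)"
    by (intro monoI integral_mono int_min) auto
  have conv: "(\<lambda>n. \<integral>x. min (Y x) (real n) \<partial>M) \<longlonglongrightarrow> (SUP n. \<integral>x. min (Y x) (real n) \<partial>M)"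
    using bnd inc by (intro LIMSEQ_incseq_SUP bdd_aboveI2[where M=B]) auto
  have "integrable M Y"
  proof (rule integrable_monotone_convergence[OF int_min _ _ conv])
    show "AE x in M. mono (\<lambda>n. min (Y x) (real n))" by (intro AE_I2 monoI) auto
    show "AE x in M. (\<lambda>n. min (Y x) (real n)) \<longlonglongrightarrow> Y x"
    proof (rule AE_I2)
      fix x
      obtain N :: nat where "Y x \<le> real N" using real_arch_simple by blast
      then have "\<forall>\<^sub>F n in sequentially. min (Y x) (real n) = Y x"
        unfolding eventually_sequentially by (intro exI[of _ N]) auto
      then show "(\<lambda>n. min (Y x) (real n)) \<longlonglongrightarrow> Y x"
        by (rule tendsto_eventually)
    qed
  qed simp
  with ni show False by simp
qed

lemma pointwise_lb:
  fixes x u :: real and n :: nat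
  assumes "x > 0" "u > 0"
  shows "min x (real n) * exp (- u * real n) \<le> (1 - exp (- u * x)) / u"
proof -
  define m where "m = min x (real n)"
  have m: "0 \<le> m" "m \<le> x" "m \<le> real n" using assms by (auto simp: m_def)
  have "1 + u*m \<le> exp (u*m)" by (rule exp_ge_add_one_self)
  then have "u*m * exp (-(u*m)) \<le> 1 - exp (-(u*m))"
    by (simp add: exp_minus field_simps)
  also have "exp (-(u*x)) \<le> exp (-(u*m))" using m assms by (simp add: mult_left_mono)
  then have "1 - exp (-(u*m)) \<le> 1 - exp (-(u*x))" by simp
  finally have a: "u*m * exp (-(u*m)) \<le> 1 - exp (-u*x)" by simp
  have "m * exp (-u * real n) \<le> m * exp (-(u*m))"
    using m assms by (intro mult_left_mono) (auto simp: mult_left_mono)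
  also have "\<dots> \<le> (1 - exp (-u*x)) / u" using a assms by (simp add: field_simps)
  finally show ?thesis by (simp add: m_def)
qed

lemma mgf_dq_inf:
  assumes ni: "\<not> integrable M Y"
  shows "filterlim (\<lambda>t. (mgf M Y t - mgf M Y 0) / (t - 0)) at_top (at 0 within {..0})"
  unfolding filterlim_at_top
proof
  fix Z :: real
  interpret prob_space M by (rule M)
  obtain n where n: "(\<integral>x. min (Y x) (real n) \<partial>M) > 2 * \<bar>Z\<bar>" using big_min[OF ni] by blast
  have npos: "real n > 0"
  proof (rule ccontr)
    assume "\<not> real n > 0" then have "n = 0" by simp
    have "(\<integral>x. min (Y x) (real n) \<partial>M) = (\<integral>x. 0 \<partial>M)"
    proof (rule Bochner_Integration.integral_cong)
      fix x assume "x \<in> space M"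
      then have "Y x > 0" by (rule Ypos)
      then show "min (Y x) (real n) = 0" using \<open>n = 0\<close> by (simp add: min_def)
    qed simp
    then have "(\<integral>x. min (Y x) (real n) \<partial>M) = 0" by simp
    with n show False by simp
  qed
  show "\<forall>\<^sub>F t in at 0 within {..0}. Z \<le> (mgf M Y t - mgf M Y 0) / (t - 0)"
    unfolding eventually_at
  proof (intro exI[of _ "1 / (2 * real n)"] conjI ballI impI)
    show "0 < 1 / (2 * real n)" using npos by simp
    fix t :: real assume t: "t \<in> {..0}" "t \<noteq> 0 \<and> dist t 0 < 1 / (2 * real n)"
    define u where "u = - t"
    have u: "u > 0" "u < 1 / (2 * real n)" using t by (auto simp: u_def dist_real_def)
    have "1 - u * real n \<le> exp (- u * real n)" using exp_ge_add_one_self[of "- u * real n"] by simp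
    moreover have "u * real n < 1/2" using u npos by (simp add: field_simps)
    ultimately have e: "exp (- u * real n) \<ge> 1/2" by simp
    have "(mgf M Y t - mgf M Y 0) / (t - 0) = (\<integral>x. (1 - exp (- u * Y x)) / u \<partial>M)"
      unfolding mgf_def using int_nonpos[of t] int_0 t
      by (simp add: u_def Bochner_Integration.integral_diff prob_space field_simps)
    also have "\<dots> \<ge> (\<integral>x. min (Y x) (real n) * exp (- u * real n) \<partial>M)"
    proof (rule integral_mono)
      show "integrable M (\<lambda>x. min (Y x) (real n) * exp (- u * real n))"
        using int_min by simp
      show "integrable M (\<lambda>x. (1 - exp (- u * Y x)) / u)"
        using int_nonpos[of t] t by (simp add: u_def)
      fix x assume "x \<in> space M"
      then show "min (Y x) (real n) * exp (- u * real n) \<le> (1 - exp (- u * Y x)) / u"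
        using pointwise_lb[of "Y x" u n] Ypos u by simp
    qed
    also have "(\<integral>x. min (Y x) (real n) * exp (- u * real n) \<partial>M)
        = (\<integral>x. min (Y x) (real n) \<partial>M) * exp (- u * real n)" by simp
    finally have "(\<integral>x. min (Y x) (real n) \<partial>M) * exp (- u * real n) \<le> (mgf M Y t - mgf M Y 0) / (t - 0)" .
    moreover have "Z \<le> (\<integral>x. min (Y x) (real n) \<partial>M) * exp (- u * real n)"
    proof -
      have "Z \<le> 2 * \<bar>Z\<bar> * (1/2)" by simp
      also have "\<dots> \<le> (\<integral>x. min (Y x) (real n) \<partial>M) * exp (- u * real n)"
        using n e by (intro mult_mono) auto
      finally show ?thesis .
    qed
    ultimately show "Z \<le> (mgf M Y t - mgf M Y 0) / (t - 0)" by linarith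
  qed
qed

lemma mgf_deriv_fin:
  fixes t0 :: real
  assumes t0: "t0 \<le> 0" and iE: "integrable M (\<lambda>x. Y x * exp (t0 * Y x))"
  shows "(mgf M Y has_real_derivative (\<integral>x. Y x * exp (t0 * Y x) \<partial>M)) (at t0 within {..0})"
proof -
  interpret prob_space M by (rule M)
  define \<delta> where "\<delta> = (if t0 < 0 then - t0 / 2 else 1)"
  have \<delta>: "\<delta> > 0" using t0 by (auto simp: \<delta>_def)
  have iw: "integrable M (\<lambda>x. Y x * exp (t0 / 2 * Y x))"
  proof (cases "t0 < 0")
    case True
    show ?thesis
    proof (rule integrable_const_bound[where B="2 / (- t0)"])
      show "AE x in M. norm (Y x * exp (t0 / 2 * Y x)) \<le> 2 / (- t0)"
      proof (rule AE_I2)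
        fix x assume "x \<in> space M"
        then have y: "Y x > 0" by (rule Ypos)
        have "1 + (- t0 / 2 * Y x) \<le> exp (- t0 / 2 * Y x)" by (rule exp_ge_add_one_self)
        then have "(- t0 / 2) * Y x \<le> exp (- t0 / 2 * Y x)" by simp
        then have "(- t0 / 2) * Y x * exp (t0 / 2 * Y x) \<le> exp (- t0 / 2 * Y x) * exp (t0 / 2 * Y x)"
          by (rule mult_right_mono) simp
        also have "\<dots> = 1" by (simp add: mult_exp_exp)
        finally show "norm (Y x * exp (t0 / 2 * Y x)) \<le> 2 / (- t0)"
          using True y by (simp add: field_simps)
      qed
    qed simp
  next
    case False
    then have "t0 = 0" using t0 by simp
    then show ?thesis using iE by simp
  qed
  show ?thesis
  proof (rule mgf_deriv_gen[OF M Ym Ypos _ _ iw \<delta>])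
    show "integrable M (\<lambda>x. exp (t0 * Y x))" by (rule int_nonpos[OF t0])
    fix t :: real assume "t \<in> {..0}" then show "integrable M (\<lambda>x. exp (t * Y x))" by (intro int_nonpos) simp
  next
    fix t :: real and x assume a: "t \<in> {..0}" "t \<noteq> t0" "\<bar>t - t0\<bar> < \<delta>" "x \<in> space M"
    have "max t t0 \<le> t0 / 2" using a t0 by (auto simp: \<delta>_def split: if_splits)
    moreover have "Y x > 0" using a by (intro Ypos)
    ultimately show "Y x * exp (max t t0 * Y x) \<le> Y x * exp (t0 / 2 * Y x)"
      by (intro mult_left_mono) (auto intro!: mult_right_mono)
  qed
qed

lemma mgf_beta:
  fixes t0 :: real
  assumes t0: "t0 \<le> 0"
  shows "((\<lambda>y. (y - t0) / (mgf M Y y - mgf M Y t0)) \<longlongrightarrow> inverse (\<integral>x. Y x * exp (t0 * Y x) \<partial>M))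
           (at t0 within {..0})"
proof (cases "integrable M (\<lambda>x. Y x * exp (t0 * Y x))")
  case True
  interpret prob_space M by (rule M)
  have pos: "(\<integral>x. Y x * exp (t0 * Y x) \<partial>M) > 0"
  proof -
    have "(\<integral>x. 0 \<partial>M) < (\<integral>x. Y x * exp (t0 * Y x) \<partial>M)"
      using True Ypos by (intro integral_less_AE_space) (auto simp: emeasure_space_1)
    then show ?thesis by simp
  qed
  have "((\<lambda>y. (mgf M Y y - mgf M Y t0) / (y - t0)) \<longlongrightarrow> (\<integral>x. Y x * exp (t0 * Y x) \<partial>M)) (at t0 within {..0})"
    using mgf_deriv_fin[OF t0 True] unfolding has_field_derivative_iff .
  from tendsto_inverse[OF this] pos show ?thesis by simp
next
  case False
  have "t0 = 0"
  proof (rule ccontr)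
    assume "t0 \<noteq> 0"
    then have "t0 < 0" using t0 by simp
    interpret prob_space M by (rule M)
    have "integrable M (\<lambda>x. Y x * exp (t0 * Y x))"
    proof (rule integrable_const_bound[where B="1 / (- t0)"])
      show "AE x in M. norm (Y x * exp (t0 * Y x)) \<le> 1 / (- t0)"
      proof (rule AE_I2)
        fix x assume "x \<in> space M"
        then have y: "Y x > 0" by (rule Ypos)
        have "1 + (- t0 * Y x) \<le> exp (- t0 * Y x)" by (rule exp_ge_add_one_self)
        then have "(- t0) * Y x \<le> exp (- t0 * Y x)" by simp
        then have "(- t0) * Y x * exp (t0 * Y x) \<le> exp (- t0 * Y x) * exp (t0 * Y x)"
          by (rule mult_right_mono) simp
        also have "\<dots> = 1" by (simp add: mult_exp_exp)
        finally show "norm (Y x * exp (t0 * Y x)) \<le> 1 / (- t0)"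
          using \<open>t0 < 0\<close> y by (simp add: field_simps)
      qed
    qed simp
    with False show False by simp
  qed
  then have ni: "\<not> integrable M Y" using False by simp
  have "((\<lambda>t. inverse ((mgf M Y t - mgf M Y 0) / (t - 0))) \<longlongrightarrow> 0) (at 0 within {..0})"
    by (rule tendsto_inverse_0_at_top[OF mgf_dq_inf[OF ni]])
  then show ?thesis using False \<open>t0 = 0\<close> by (simp add: not_integrable_integral_eq)
qed

lemma mgf_deriv_I:
  fixes r :: real
  assumes r: "0 \<le> r" "integrable M (\<lambda>x. exp (r * Y x))"
    and iE: "integrable M (\<lambda>x. Y x * exp (r * Y x))"
  shows "(mgf M Y has_real_derivative (\<integral>x. Y x * exp (r * Y x) \<partial>M))
           (at r within {s. 0 \<le> s \<and> integrable M (\<lambda>x. exp (s * Y x))})"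
proof (cases "\<exists>s1. r < s1 \<and> integrable M (\<lambda>x. exp (s1 * Y x))")
  case True
  then obtain s1 where s1: "r < s1" "integrable M (\<lambda>x. exp (s1 * Y x))" by blast
  define s2 where "s2 = (r + s1) / 2"
  define d where "d = s1 - s2"
  have d: "d > 0" "s2 > r" using s1 by (auto simp: d_def s2_def)
  let ?w = "\<lambda>x. Y x * exp (r * Y x) + exp (s1 * Y x) / d"
  show ?thesis
  proof (rule mgf_deriv_gen[OF M Ym Ypos r(2), where \<delta>="s2 - r"])
    show "integrable M ?w" by (intro Bochner_Integration.integrable_add integrable_divide_zero iE s1(2))
  next
    show "0 < s2 - r" using d by simp
  next
    fix t assume "t \<in> {s. 0 \<le> s \<and> integrable M (\<lambda>x. exp (s * Y x))}"
    then show "integrable M (\<lambda>x. exp (t * Y x))" by simp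
  next
    fix t x assume a: "t \<in> {s. 0 \<le> s \<and> integrable M (\<lambda>x. exp (s * Y x))}" "t \<noteq> r" "\<bar>t - r\<bar> < s2 - r" "x \<in> space M"
    have y: "Y x > 0" using a by (intro Ypos)
    have e2: "0 \<le> exp (s1 * Y x) / d" using d by simp
    show "Y x * exp (max t r * Y x) \<le> ?w x"
    proof (cases "t \<le> r")
      case True then show ?thesis using e2 by (simp add: max_def)
    next
      case False
      then have "max t r \<le> s2" using a by auto
      then have "Y x * exp (max t r * Y x) \<le> Y x * exp (s2 * Y x)"
        using y by (intro mult_left_mono) (simp_all add: mult_right_mono)
      also have "\<dots> \<le> exp (s1 * Y x) / d"
      proof -
        have "d * Y x \<le> exp (d * Y x)" using exp_ge_add_one_self[of "d * Y x"] by linarith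
        then have "d * Y x * exp (s2 * Y x) \<le> exp (d * Y x) * exp (s2 * Y x)"
          by (rule mult_right_mono) simp
        also have "\<dots> = exp (s1 * Y x)" by (simp add: mult_exp_exp d_def algebra_simps)
        finally have "d * (Y x * exp (s2 * Y x)) \<le> exp (s1 * Y x)" by (simp add: mult.assoc)
        then show ?thesis using d by (simp add: pos_le_divide_eq mult.commute)
      qed
      also have "\<dots> \<le> ?w x" using y by (simp add: zero_le_mult_iff)
      finally show ?thesis .
    qed
  qed
next
  case False
  show ?thesis
  proof (rule mgf_deriv_gen[OF M Ym Ypos r(2) _ iE zero_less_one])
    fix t x assume a: "t \<in> {s. 0 \<le> s \<and> integrable M (\<lambda>x. exp (s * Y x))}" "t \<noteq> r" "\<bar>t - r\<bar> < 1" "x \<in> space M"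
    have "t \<le> r"
    proof (rule ccontr)
      assume "\<not> t \<le> r"
      then show False using False a(1) by auto
    qed
    then show "Y x * exp (max t r * Y x) \<le> Y x * exp (r * Y x)" by (simp add: max_def)
  next
    fix t assume "t \<in> {s. 0 \<le> s \<and> integrable M (\<lambda>x. exp (s * Y x))}"
    then show "integrable M (\<lambda>x. exp (t * Y x))" by simp
  qed
qed

end



theorem lemma3p6:
  fixes P :: "'a measure"
    and \<Theta> :: "'a \<Rightarrow> real ^ 'd"
    and D :: "(real ^ 'd) set"
    and W X :: "nat \<Rightarrow> 'a \<Rightarrow> real"
    and K :: "real ^ 'd \<Rightarrow> real measure"
    and c :: "real ^ 'd \<Rightarrow> real"
    and \<xi> :: "real ^ 'd \<Rightarrow> real"
    and P\<theta> Q\<theta> :: "real ^ 'd \<Rightarrow> 'a measure"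
    and L :: "(real ^ 'd) set"
    and r :: real
  assumes P: "prob_space P"
    and D: "D \<in> sets borel"
    and Theta_meas: "\<Theta> \<in> borel_measurable P" and Theta_D: "\<And>\<omega>. \<Theta> \<omega> \<in> D"
    and W_meas: "\<And>n. W n \<in> borel_measurable P" and W_pos: "\<And>n \<omega>. W n \<omega> > 0"
    and X_meas: "\<And>n. X n \<in> borel_measurable P" and X_pos: "\<And>n \<omega>. X n \<omega> > 0"
    and c_meas: "c \<in> borel_measurable borel" and c_pos: "\<And>\<theta>. \<theta> \<in> D \<Longrightarrow> c \<theta> > 0"
    and xi_meas: "\<xi> \<in> borel_measurable borel"
    and xi_pos: "AE \<theta> in distr P borel \<Theta>. \<xi> \<theta> > 0"
    and xi_int: "(\<integral>\<omega>. \<xi> (\<Theta> \<omega>) \<partial>P) = 1"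
    and r_nonneg: "r \<ge> 0"
    and r_mgf: "integrable P (\<lambda>\<omega>. exp (r * X 1 \<omega>))"
    and r_mean: "integrable P (\<lambda>\<omega>. X 1 \<omega> * exp (r * X 1 \<omega>))"
    and L_borel: "L \<in> sets borel"
    and L_null: "L \<in> null_sets (distr P borel \<Theta>)"
    and P\<theta>_prob: "\<And>\<theta>. \<theta> \<in> D - L \<Longrightarrow> prob_space (P\<theta> \<theta>) \<and> sets (P\<theta> \<theta>) = sets P"
    and Q\<theta>_prob: "\<And>\<theta>. \<theta> \<in> D - L \<Longrightarrow> prob_space (Q\<theta> \<theta>) \<and> sets (Q\<theta> \<theta>) = sets P"
    and P\<theta>_W: "\<And>\<theta>. \<theta> \<in> D - L \<Longrightarrow> distr (P\<theta> \<theta>) borel (W 1) = K \<theta>"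
    and P\<theta>_X: "\<And>\<theta>. \<theta> \<in> D - L \<Longrightarrow> distr (P\<theta> \<theta>) borel (X 1) = distr P borel (X 1)"
    and Q\<theta>_W: "\<And>\<theta>. \<theta> \<in> D - L \<Longrightarrow>
        distr (Q\<theta> \<theta>) borel (W 1) =
          exp_tilt (K \<theta>) (- (kappa P (P\<theta> \<theta>) (X 1) (W 1) (c \<theta>) r + c \<theta> * r))"
    and Q\<theta>_X: "\<And>\<theta>. \<theta> \<in> D - L \<Longrightarrow>
        distr (Q\<theta> \<theta>) borel (X 1) = exp_tilt (distr P borel (X 1)) r"
  shows "\<forall>\<theta> \<in> D - L.
    ((\<lambda>s. kappa P (P\<theta> \<theta>) (X 1) (W 1) (c \<theta>) s) has_real_derivative
        ((\<integral>\<omega>. X 1 \<omega> \<partial>Q\<theta> \<theta>) / (\<integral>\<omega>. W 1 \<omega> \<partial>Q\<theta> \<theta>) - c \<theta>))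
      (at r within {s. 0 \<le> s \<and> integrable P (\<lambda>\<omega>. exp (s * X 1 \<omega>))})"
proof (intro ballI)
  fix \<theta> assume th: "\<theta> \<in> D - L"
  define \<mu> where "\<mu> = P\<theta> \<theta>"
  define c\<theta> where "c\<theta> = c \<theta>"
  have \<mu>: "prob_space \<mu>" "sets \<mu> = sets P" using P\<theta>_prob[OF th] by (auto simp: \<mu>_def)
  have sp\<mu>: "space \<mu> = space P" using \<mu>(2) by (rule sets_eq_imp_space_eq)
  have W\<mu>: "W 1 \<in> borel_measurable \<mu>" using W_meas[of 1] by (simp add: measurable_cong_sets[OF \<mu>(2) refl])
  interpret Fw: pmgf \<mu> "W 1" by (rule pmgf.intro[OF \<mu>(1) W\<mu>]) (rule W_pos)
  interpret Gx: pmgf P "X 1" by (rule pmgf.intro[OF P X_meas]) (rule X_pos)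
  define I where "I = {s. 0 \<le> s \<and> integrable P (\<lambda>\<omega>. exp (s * X 1 \<omega>))}"
  define G where "G = mgf P (X 1)"
  define F where "F = mgf \<mu> (W 1)"
  define u where "u s = - kappa P \<mu> (X 1) (W 1) c\<theta> s - c\<theta> * s" for s
  have rI: "r \<in> I" using r_nonneg r_mgf by (simp add: I_def)
  have G1: "G s \<ge> 1" if "s \<in> I" for s
    using that Gx.mgf_gt1[of s] Gx.mgf_0 by (cases "s = 0") (auto simp: I_def G_def)
  have Gstrict: "G s1 < G s2" if "s1 \<in> I" "s2 \<in> I" "s1 < s2" for s1 s2
    using that Gx.mgf_strict[of s1 s2] by (auto simp: I_def G_def)
  have uprop: "F (u s) = inverse (G s) \<and> u s \<le> 0" if s: "s \<in> I" for s
  proof -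
    have y: "0 < inverse (G s)" "inverse (G s) \<le> 1" using G1[OF s] by (auto simp: field_simps)
    obtain t where t: "t \<le> 0" "F t = inverse (G s)" using Fw.mgf_solve[OF y] by (auto simp: F_def)
    have tu: "t' = t" if "F t' = inverse (G s)" for t'
      using Fw.mgf_unique[OF y] that t by (auto simp: F_def)
    have ex1: "\<exists>!k. mgf P (X 1) s * mgf \<mu> (W 1) (- k - c\<theta> * s) = 1"
    proof (rule ex1I[where a="- t - c\<theta> * s"])
      show "mgf P (X 1) s * mgf \<mu> (W 1) (- (- t - c\<theta> * s) - c\<theta> * s) = 1"
        using t G1[OF s] by (simp add: F_def G_def)
      fix k assume "mgf P (X 1) s * mgf \<mu> (W 1) (- k - c\<theta> * s) = 1"
      then have "F (- k - c\<theta> * s) = inverse (G s)"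
        using G1[OF s] by (simp add: F_def G_def field_simps)
      then have "- k - c\<theta> * s = t" by (rule tu)
      then show "k = - t - c\<theta> * s" by simp
    qed
    have "mgf P (X 1) s * mgf \<mu> (W 1) (- kappa P \<mu> (X 1) (W 1) c\<theta> s - c\<theta> * s) = 1"
      unfolding kappa_def by (rule theI'[OF ex1])
    then have "F (u s) = inverse (G s)" using G1[OF s] by (simp add: F_def G_def u_def field_simps)
    moreover then have "u s = t" by (rule tu)
    ultimately show ?thesis using t by simp
  qed
  define t0 where "t0 = u r"
  have t0: "t0 \<le> 0" "F t0 = inverse (G r)" using uprop[OF rI] by (auto simp: t0_def)
  define G' where "G' = (\<integral>\<omega>. X 1 \<omega> * exp (r * X 1 \<omega>) \<partial>P)"
  define E where "E = (\<integral>\<omega>. W 1 \<omega> * exp (t0 * W 1 \<omega>) \<partial>\<mu>)"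
  have dG: "(G has_real_derivative G') (at r within I)"
    unfolding G_def G'_def I_def by (rule Gx.mgf_deriv_I[OF r_nonneg r_mgf r_mean])
  have Gr: "G r \<noteq> 0" using G1[OF rI] by simp
  have dv: "((\<lambda>s. inverse (G s)) has_real_derivative (- (G' * inverse (G r ^ Suc (Suc 0))))) (at r within I)"
    by (rule DERIV_inverse_fun[OF dG Gr])
  have vc: "((\<lambda>s. inverse (G s)) \<longlongrightarrow> inverse (G r)) (at r within I)"
    using DERIV_continuous[OF dv] by (simp add: continuous_within)
  have cont: "(u \<longlongrightarrow> u r) (at r within I)"
  proof (rule inv_cont[where F=F and v="\<lambda>s. inverse (G s)"])
    fix a b :: real assume "a < b" "b \<le> 0"
    then show "F a < F b" unfolding F_def using Fw.mgf_strict Fw.int_nonpos by simp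
  next
    fix s assume "s \<in> I" then show "F (u s) = inverse (G s)" using uprop by blast
  next
    fix s assume "s \<in> I" then show "u s \<le> 0" using uprop by blast
  next
    show "((\<lambda>s. inverse (G s)) \<longlongrightarrow> inverse (G r)) (at r within I)" by (rule vc)
  next
    show "r \<in> I" by (rule rI)
  qed
  have du: "(u has_real_derivative (- (G' * inverse (G r ^ Suc (Suc 0)))) * inverse E) (at r within I)"
  proof (rule inv_deriv[where F=F and v="\<lambda>s. inverse (G s)" and T="{..0}"])
    fix s assume "s \<in> I" "s \<noteq> r"
    then show "inverse (G s) \<noteq> inverse (G r)"
      using Gstrict[of s r] Gstrict[of r s] rI by (cases s r rule: linorder_cases) auto
  next
    show "((\<lambda>y. (y - u r) / (F y - F (u r))) \<longlongrightarrow> inverse E) (at (u r) within {..0})"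
      using Fw.mgf_beta[OF t0(1)] by (simp add: E_def F_def t0_def)
  next
    fix s assume "s \<in> I" then show "F (u s) = inverse (G s)" using uprop by blast
  next
    fix s assume "s \<in> I" then show "u s \<in> {..0}" using uprop by blast
  next
    show "(u \<longlongrightarrow> u r) (at r within I)" by (rule cont)
  next
    show "((\<lambda>s. inverse (G s)) has_real_derivative (- (G' * inverse (G r ^ Suc (Suc 0))))) (at r within I)" by (rule dv)
  next
    show "r \<in> I" by (rule rI)
  qed
  have keq: "(\<lambda>s. kappa P (P\<theta> \<theta>) (X 1) (W 1) (c \<theta>) s) = (\<lambda>s. - u s - c\<theta> * s)"
    by (simp add: u_def \<mu>_def c\<theta>_def)
  have dk: "((\<lambda>s. kappa P (P\<theta> \<theta>) (X 1) (W 1) (c \<theta>) s) has_real_derivative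
      (- ((- (G' * inverse (G r ^ Suc (Suc 0)))) * inverse E) - c\<theta>)) (at r within I)"
    unfolding keq
  proof -
    have "((\<lambda>s. - u s - c\<theta> * s) has_real_derivative
      (- ((- (G' * inverse (G r ^ Suc (Suc 0)))) * inverse E) - c\<theta> * 1)) (at r within I)"
      by (intro DERIV_diff DERIV_minus du DERIV_cmult DERIV_ident)
    then show "((\<lambda>s. - u s - c\<theta> * s) has_real_derivative
      (- ((- (G' * inverse (G r ^ Suc (Suc 0)))) * inverse E) - c\<theta>)) (at r within I)" by simp
  qed
  have Q: "prob_space (Q\<theta> \<theta>)" "sets (Q\<theta> \<theta>) = sets P" using Q\<theta>_prob[OF th] by auto
  have XQ: "X 1 \<in> borel_measurable (Q\<theta> \<theta>)" using X_meas[of 1] by (simp add: measurable_cong_sets[OF Q(2) refl])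
  have WQ: "W 1 \<in> borel_measurable (Q\<theta> \<theta>)" using W_meas[of 1] by (simp add: measurable_cong_sets[OF Q(2) refl])
  have NX: "(\<integral>y. exp (r * y) \<partial>distr P borel (X 1)) = G r"
    by (subst integral_distr[OF X_meas]) (auto simp: G_def mgf_def)
  have EX: "(\<integral>\<omega>. X 1 \<omega> \<partial>Q\<theta> \<theta>) = G' / G r"
  proof -
    have "(\<integral>\<omega>. X 1 \<omega> \<partial>Q\<theta> \<theta>) = (\<integral>x. x \<partial>distr (Q\<theta> \<theta>) borel (X 1))"
      by (subst integral_distr[OF XQ]) auto
    also have "\<dots> = (\<integral>x. x \<partial>exp_tilt (distr P borel (X 1)) r)" unfolding Q\<theta>_X[OF th] ..
    also have "\<dots> = (\<integral>x. (exp (r * x) / G r) * x \<partial>distr P borel (X 1))"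
      unfolding exp_tilt_def NX using G1[OF rI] by (subst integral_density) auto
    also have "\<dots> = (\<integral>\<omega>. (exp (r * X 1 \<omega>) / G r) * X 1 \<omega> \<partial>P)"
      by (subst integral_distr[OF X_meas]) auto
    also have "\<dots> = (\<integral>\<omega>. X 1 \<omega> * exp (r * X 1 \<omega>) / G r \<partial>P)"
      by (simp add: mult.commute)
    also have "\<dots> = G' / G r" unfolding G'_def by (rule integral_divide_zero)
    finally show ?thesis .
  qed
  have NW: "(\<integral>y. exp (t0 * y) \<partial>K \<theta>) = inverse (G r)"
    unfolding P\<theta>_W[OF th, symmetric] \<mu>_def[symmetric] t0(2)[symmetric]
    by (subst integral_distr[OF W\<mu>]) (auto simp: F_def mgf_def)
  have EW: "(\<integral>\<omega>. W 1 \<omega> \<partial>Q\<theta> \<theta>) = E * G r"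
  proof -
    have ex: "- (kappa P (P\<theta> \<theta>) (X 1) (W 1) (c \<theta>) r + c \<theta> * r) = t0"
      by (simp add: t0_def u_def \<mu>_def c\<theta>_def)
    have "(\<integral>\<omega>. W 1 \<omega> \<partial>Q\<theta> \<theta>) = (\<integral>x. x \<partial>distr (Q\<theta> \<theta>) borel (W 1))"
      by (subst integral_distr[OF WQ]) auto
    also have "\<dots> = (\<integral>x. x \<partial>exp_tilt (K \<theta>) t0)" unfolding Q\<theta>_W[OF th] ex ..
    also have "\<dots> = (\<integral>x. (exp (t0 * x) / inverse (G r)) * x \<partial>K \<theta>)"
    proof -
      have sK: "sets (K \<theta>) = sets borel" unfolding P\<theta>_W[OF th, symmetric] by simp
      have m: "(\<lambda>x. exp (t0 * x) / inverse (G r)) \<in> borel_measurable (K \<theta>)"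
        unfolding measurable_cong_sets[OF sK refl] by measurable
      show ?thesis
        unfolding exp_tilt_def NW using G1[OF rI]
        by (subst integral_density[OF _ m]) (auto simp: measurable_cong_sets[OF sK refl])
    qed
    also have "\<dots> = (\<integral>\<omega>. (exp (t0 * W 1 \<omega>) / inverse (G r)) * W 1 \<omega> \<partial>\<mu>)"
      unfolding P\<theta>_W[OF th, symmetric] \<mu>_def[symmetric]
      by (subst integral_distr[OF W\<mu>]) auto
    also have "\<dots> = (\<integral>\<omega>. W 1 \<omega> * exp (t0 * W 1 \<omega>) / inverse (G r) \<partial>\<mu>)"
      by (simp add: mult.commute)
    also have "\<dots> = E / inverse (G r)" unfolding E_def by (rule integral_divide_zero)
    finally show ?thesis by (simp add: divide_inverse)
  qed
  have val: "- ((- (G' * inverse (G r ^ Suc (Suc 0)))) * inverse E) - c\<theta> = G' / G r / (E * G r) - c \<theta>"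
    by (simp add: c\<theta>_def divide_inverse inverse_mult_distrib power2_eq_square mult_ac)
  show "((\<lambda>s. kappa P (P\<theta> \<theta>) (X 1) (W 1) (c \<theta>) s) has_real_derivative
        ((\<integral>\<omega>. X 1 \<omega> \<partial>Q\<theta> \<theta>) / (\<integral>\<omega>. W 1 \<omega> \<partial>Q\<theta> \<theta>) - c \<theta>))
      (at r within {s. 0 \<le> s \<and> integrable P (\<lambda>\<omega>. exp (s * X 1 \<omega>))})"
    using dk unfolding EX EW val I_def .
qed

end
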